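(* If $n\equiv 0$ or $n\equiv 1\pmod 4$, then $\mathcal{AM}_n$ is generated by $\mathcal{AO}_n\cup\{h\}$.
   Context: Let $n\geqslant 2$, $\Omega_n=\{1<2<\cdots<n\}$ and $\mathcal{I}_n$ the monoid of all partial injective maps of $\Omega_n$, composed left to right. $\mathcal{AI}_n$ is the set of all $\alpha\in\mathcal{I}_n$ with $\alpha=\sigma|_{\mathrm{Dom}(\alpha)}$ for some even permutation $\sigma$; $\mathcal{POI}_n$ (resp. $\mathcal{PMI}_n$) is the set of order-preserving (resp. order-preserving or order-reversing) elements; $\mathcal{AO}_n=\mathcal{AI}_n\cap\mathcal{POI}_n$, $\mathcal{AM}_n=\mathcal{AI}_n\cap\mathcal{PMI}_n$. $h$ is the permutation $i\mapsto n+1-i$ of $\Omega_n$ (which lies in $\mathcal{AM}_n$ when $n\equiv 0,1\pmod 4$). *)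

theory Defs
  imports "HOL-Combinatorics.Permutations"
begin

text \<open>Partial injective maps of Omega_n = {1..n}, represented as partial functions
  nat \<rightharpoonup> nat with domain and range inside {1..n}.\<close>

definition PI :: "nat \<Rightarrow> (nat \<rightharpoonup> nat) set" where
  "PI n = {\<alpha>. dom \<alpha> \<subseteq> {1..n} \<and> ran \<alpha> \<subseteq> {1..n} \<and> inj_on \<alpha> (dom \<alpha>)}"

text \<open>Composition left to right: first alpha, then beta.\<close>
definition pcomp :: "(nat \<rightharpoonup> nat) \<Rightarrow> (nat \<rightharpoonup> nat) \<Rightarrow> (nat \<rightharpoonup> nat)" where
  "pcomp \<alpha> \<beta> = \<beta> \<circ>\<^sub>m \<alpha>"

definition AI :: "nat \<Rightarrow> (nat \<rightharpoonup> nat) set" where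
  "AI n = {\<alpha> \<in> PI n. \<exists>\<sigma>. \<sigma> permutes {1..n} \<and> evenperm \<sigma> \<and>
                         (\<forall>x \<in> dom \<alpha>. \<alpha> x = Some (\<sigma> x))}"

definition POI :: "nat \<Rightarrow> (nat \<rightharpoonup> nat) set" where
  "POI n = {\<alpha> \<in> PI n. \<forall>x \<in> dom \<alpha>. \<forall>y \<in> dom \<alpha>. x < y \<longrightarrow> the (\<alpha> x) < the (\<alpha> y)}"

definition PMI :: "nat \<Rightarrow> (nat \<rightharpoonup> nat) set" where
  "PMI n = POI n \<union>
     {\<alpha> \<in> PI n. \<forall>x \<in> dom \<alpha>. \<forall>y \<in> dom \<alpha>. x < y \<longrightarrow> the (\<alpha> x) > the (\<alpha> y)}"

definition AO :: "nat \<Rightarrow> (nat \<rightharpoonup> nat) set" where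
  "AO n = AI n \<inter> POI n"

definition AM :: "nat \<Rightarrow> (nat \<rightharpoonup> nat) set" where
  "AM n = AI n \<inter> PMI n"

definition hrev :: "nat \<Rightarrow> (nat \<rightharpoonup> nat)" where
  "hrev n = (\<lambda>i. if i \<in> {1..n} then Some (n + 1 - i) else None)"

definition pid :: "nat \<Rightarrow> (nat \<rightharpoonup> nat)" where
  "pid n = (\<lambda>i. if i \<in> {1..n} then Some i else None)"

inductive_set generated :: "nat \<Rightarrow> (nat \<rightharpoonup> nat) set \<Rightarrow> (nat \<rightharpoonup> nat) set"
  for n :: nat and A :: "(nat \<rightharpoonup> nat) set" where
  gen_id: "pid n \<in> generated n A"
| gen_base: "a \<in> A \<Longrightarrow> a \<in> generated n A"
| gen_comp: "a \<in> generated n A \<Longrightarrow> b \<in> generated n A \<Longrightarrow> pcomp a b \<in> generated n A"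

end

theory Submission imports Defs begin

definition revp :: "nat \<Rightarrow> nat \<Rightarrow> nat \<Rightarrow> nat" where
  "revp a k i = (if a \<le> i \<and> i < a + k then 2*a + k - 1 - i else i)"

lemma revp_invol: "revp a k (revp a k i) = i"
  by (auto simp: revp_def)

lemma revp_permutes: "revp a k permutes {a..<a+k}"
  unfolding permutes_def
proof (intro conjI allI impI)
  fix x assume "x \<notin> {a..<a+k}" then show "revp a k x = x" by (auto simp: revp_def)
next
  fix y show "\<exists>!x. revp a k x = y" by (metis revp_invol)
qed

lemma revp_perm: "permutation (revp a k)"
  using revp_permutes permutation_permutes by blast

lemma revp_step: "revp a (k+2) = transpose a (a+k+1) \<circ> revp (a+1) k"
  by (auto simp: revp_def transpose_def fun_eq_iff)

lemma revp_even: "evenperm (revp a k) = even (k div 2)"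
proof (induction k arbitrary: a rule: nat_less_induct)
  case (1 k)
  show ?case
  proof (cases "k < 2")
    case True
    then have "revp a k = id" by (auto simp: revp_def fun_eq_iff)
    then show ?thesis using True by (auto simp: less_2_cases_iff)
  next
    case False
    then obtain m where m: "k = m + 2" by (metis add.commute le_Suc_ex not_less)
    have "evenperm (revp a k) = (evenperm (transpose a (a+m+1)) = evenperm (revp (a+1) m))"
      unfolding m revp_step by (rule evenperm_comp) (simp_all add: revp_perm permutation_swap_id)
    also have "\<dots> = (\<not> even (m div 2))" using 1 m by (simp add: evenperm_swap)
    also have "\<dots> = even (k div 2)" using m by simp
    finally show ?thesis .
  qed
qed

definition hp :: "nat \<Rightarrow> nat \<Rightarrow> nat" where "hp n = revp 1 n"

lemma hp_permutes: "hp n permutes {1..n}"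
  using revp_permutes[of 1 n] unfolding hp_def
  by (metis atLeastLessThanSuc_atLeastAtMost plus_1_eq_Suc)

lemma hp_even: "n mod 4 = 0 \<or> n mod 4 = 1 \<Longrightarrow> evenperm (hp n)"
  unfolding hp_def revp_even by presburger

lemma hrev_hp: "hrev n i = (if i \<in> {1..n} then Some (hp n i) else None)"
  by (auto simp: hrev_def hp_def revp_def)

lemma PI_comp: "a \<in> PI n \<Longrightarrow> b \<in> PI n \<Longrightarrow> pcomp a b \<in> PI n"
proof -
  assume A: "a \<in> PI n" and B: "b \<in> PI n"
  have d: "dom (pcomp a b) \<subseteq> dom a" by (auto simp: pcomp_def map_comp_def dom_def split: option.splits)
  have r: "ran (pcomp a b) \<subseteq> ran b" by (auto simp: pcomp_def map_comp_def ran_def split: option.splits)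
  have i: "inj_on (pcomp a b) (dom (pcomp a b))"
  proof (rule inj_onI)
    fix x y assume x: "x \<in> dom (pcomp a b)" and y: "y \<in> dom (pcomp a b)" and e: "pcomp a b x = pcomp a b y"
    obtain u v where u: "a x = Some u" "b u \<noteq> None" and v: "a y = Some v" "b v \<noteq> None"
      using x y by (auto simp: pcomp_def map_comp_def dom_def split: option.splits)
    have "b u = b v" using e u v by (simp add: pcomp_def)
    then have "u = v" using B u v unfolding PI_def by (auto dest: inj_onD)
    then have "a x = a y" using u v by simp
    moreover have "inj_on a (dom a)" using A by (simp add: PI_def)
    ultimately show "x = y" using inj_onD[of a "dom a" x y] u v by blast
  qed
  show ?thesis using A B d r i unfolding PI_def by blast
qed

lemma AI_comp: "a \<in> AI n \<Longrightarrow> b \<in> AI n \<Longrightarrow> pcomp a b \<in> AI n"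
proof -
  assume A: "a \<in> AI n" and B: "b \<in> AI n"
  then obtain s t where s: "s permutes {1..n}" "evenperm s" "\<forall>x\<in>dom a. a x = Some (s x)"
    and t: "t permutes {1..n}" "evenperm t" "\<forall>x\<in>dom b. b x = Some (t x)"
    unfolding AI_def by blast
  have "t \<circ> s permutes {1..n}" using s t permutes_compose by blast
  moreover have "evenperm (t \<circ> s)"
    using evenperm_comp[OF permutes_imp_permutation[OF finite_atLeastAtMost t(1)]
       permutes_imp_permutation[OF finite_atLeastAtMost s(1)]] s(2) t(2) by simp
  moreover have "\<forall>x\<in>dom (pcomp a b). pcomp a b x = Some ((t \<circ> s) x)"
    using s(3) t(3) by (auto simp: pcomp_def map_comp_def dom_def split: option.splits)
  ultimately show ?thesis using A B PI_comp unfolding AI_def by blast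
qed

lemma pid_AM: "pid n \<in> AM n"
proof -
  have "pid n \<in> PI n" unfolding PI_def pid_def by (auto simp: dom_def ran_def inj_on_def split: if_splits)
  moreover have "\<forall>x\<in>dom (pid n). pid n x = Some (id x)" by (auto simp: pid_def dom_def)
  moreover have "pid n \<in> POI n" using calculation(1) unfolding POI_def by (auto simp: pid_def dom_def)
  ultimately have "pid n \<in> AI n" "pid n \<in> PMI n" unfolding AI_def PMI_def
    using permutes_id[of "{1..n}"] evenperm_id by blast+
  then show ?thesis unfolding AM_def by blast
qed

lemma hrev_AM: "n mod 4 = 0 \<or> n mod 4 = 1 \<Longrightarrow> hrev n \<in> AM n"
proof -
  assume n: "n mod 4 = 0 \<or> n mod 4 = 1"
  have P: "hrev n \<in> PI n" unfolding PI_def hrev_def by (auto simp: dom_def ran_def inj_on_def split: if_splits)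
  moreover have "\<forall>x\<in>dom (hrev n). hrev n x = Some (hp n x)" by (auto simp: hrev_hp dom_def)
  moreover have "hrev n \<in> {\<alpha> \<in> PI n. \<forall>x \<in> dom \<alpha>. \<forall>y \<in> dom \<alpha>. x < y \<longrightarrow> the (\<alpha> x) > the (\<alpha> y)}"
    using P by (auto simp: hrev_def dom_def)
  ultimately have "hrev n \<in> AI n" "hrev n \<in> PMI n" unfolding AI_def PMI_def
    using hp_permutes[of n] hp_even[OF n] by blast+
  then show ?thesis unfolding AM_def by blast
qed

lemma comp_D: "x \<in> dom (pcomp a b) \<Longrightarrow> x \<in> dom a \<and> the (a x) \<in> dom b \<and> the (pcomp a b x) = the (b (the (a x)))"
  by (auto simp: pcomp_def map_comp_def dom_def split: option.splits)

lemma PMI_comp: "a \<in> PMI n \<Longrightarrow> b \<in> PMI n \<Longrightarrow> pcomp a b \<in> PMI n"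
proof -
  assume A: "a \<in> PMI n" and B: "b \<in> PMI n"
  have P: "pcomp a b \<in> PI n" using A B PI_comp unfolding PMI_def POI_def by blast
  define inc where "inc = (\<lambda>\<alpha>::nat \<rightharpoonup> nat. \<forall>x\<in>dom \<alpha>. \<forall>y\<in>dom \<alpha>. x < y \<longrightarrow> the (\<alpha> x) < the (\<alpha> y))"
  define dec where "dec = (\<lambda>\<alpha>::nat \<rightharpoonup> nat. \<forall>x\<in>dom \<alpha>. \<forall>y\<in>dom \<alpha>. x < y \<longrightarrow> the (\<alpha> x) > the (\<alpha> y))"
  have a: "inc a \<or> dec a" using A unfolding PMI_def POI_def inc_def dec_def by blast
  have b: "inc b \<or> dec b" using B unfolding PMI_def POI_def inc_def dec_def by blast
  have "inc (pcomp a b) \<or> dec (pcomp a b)"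
  proof -
    { assume "inc a" "inc b"
      then have "inc (pcomp a b)" unfolding inc_def by (metis comp_D) }
    moreover
    { assume "dec a" "inc b"
      then have "dec (pcomp a b)" unfolding inc_def dec_def by (metis comp_D) }
    moreover
    { assume "inc a" "dec b"
      then have "dec (pcomp a b)" unfolding inc_def dec_def by (metis comp_D) }
    moreover
    { assume "dec a" "dec b"
      then have "inc (pcomp a b)" unfolding inc_def dec_def by (metis comp_D) }
    ultimately show ?thesis using a b by blast
  qed
  then show ?thesis using P unfolding PMI_def POI_def inc_def dec_def by blast
qed

lemma AM_comp: "a \<in> AM n \<Longrightarrow> b \<in> AM n \<Longrightarrow> pcomp a b \<in> AM n"
  unfolding AM_def using AI_comp PMI_comp by blast

lemma gen_sub: assumes "n mod 4 = 0 \<or> n mod 4 = 1" shows "generated n (AO n \<union> {hrev n}) \<subseteq> AM n"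
proof
  fix x assume "x \<in> generated n (AO n \<union> {hrev n})"
  then show "x \<in> AM n"
  proof (induction rule: generated.induct)
    case gen_id then show ?case by (rule pid_AM)
  next
    case (gen_base a) then show ?case using hrev_AM[OF assms] unfolding AO_def AM_def PMI_def by blast
  next
    case (gen_comp a b) then show ?case by (simp add: AM_comp)
  qed
qed

lemma AM_sub: assumes n: "n mod 4 = 0 \<or> n mod 4 = 1" and al: "\<alpha> \<in> AM n"
  shows "\<alpha> \<in> generated n (AO n \<union> {hrev n})"
proof (cases "\<alpha> \<in> POI n")
  case True
  then show ?thesis using al unfolding AM_def AO_def by (blast intro: generated.gen_base)
next
  case False
  then have PIa: "\<alpha> \<in> PI n" and dec: "\<forall>x\<in>dom \<alpha>. \<forall>y\<in>dom \<alpha>. x < y \<longrightarrow> the (\<alpha> x) > the (\<alpha> y)"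
    using al unfolding AM_def PMI_def by auto
  have h: "hrev n \<in> AI n" "hrev n \<in> PI n" using hrev_AM[OF n] unfolding AM_def AI_def by auto
  define \<beta> where "\<beta> = pcomp \<alpha> (hrev n)"
  have ran: "x \<in> dom \<alpha> \<Longrightarrow> the (\<alpha> x) \<in> {1..n}" for x
    using PIa unfolding PI_def by (auto simp: ran_def dom_def)
  have bAI: "\<beta> \<in> AI n" unfolding \<beta>_def using AI_comp al h unfolding AM_def by blast
  have bPOI: "\<beta> \<in> POI n"
    unfolding POI_def
  proof (intro CollectI conjI ballI impI)
    show "\<beta> \<in> PI n" using bAI unfolding AI_def by blast
  next
    fix x y assume x: "x \<in> dom \<beta>" and y: "y \<in> dom \<beta>" and xy: "x < y"
    have dx: "x \<in> dom \<alpha>" "the (\<beta> x) = the (hrev n (the (\<alpha> x)))" using comp_D[OF x[unfolded \<beta>_def]] \<beta>_def by auto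
    have dy: "y \<in> dom \<alpha>" "the (\<beta> y) = the (hrev n (the (\<alpha> y)))" using comp_D[OF y[unfolded \<beta>_def]] \<beta>_def by auto
    have "the (\<alpha> x) > the (\<alpha> y)" using dec dx dy xy by blast
    then show "the (\<beta> x) < the (\<beta> y)" using dx dy ran[OF dx(1)] ran[OF dy(1)]
      by (auto simp: hrev_def)
  qed
  have eq: "pcomp \<beta> (hrev n) = \<alpha>"
  proof
    fix x show "pcomp \<beta> (hrev n) x = \<alpha> x"
    proof (cases "\<alpha> x")
      case None then show ?thesis by (simp add: \<beta>_def pcomp_def)
    next
      case (Some v)
      then have "v \<in> {1..n}" using ran[of x] by (auto simp: dom_def)
      then show ?thesis using Some by (auto simp: \<beta>_def pcomp_def hrev_def)
    qed
  qed
  have "\<beta> \<in> generated n (AO n \<union> {hrev n})" using bAI bPOI unfolding AO_def by (blast intro: generated.gen_base)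
  moreover have "hrev n \<in> generated n (AO n \<union> {hrev n})" by (blast intro: generated.gen_base)
  ultimately show ?thesis using generated.gen_comp eq by metis
qed

theorem lemma5p1:
  fixes n :: nat
  assumes "n \<ge> 2"
    and "n mod 4 = 0 \<or> n mod 4 = 1"
  shows "AM n = generated n (AO n \<union> {hrev n})"
  using gen_sub[OF assms(2)] AM_sub[OF assms(2)] by blast

end
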